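(* Let $K\subseteq\mathbb{R}^d$ be a convex body and let $\nu$ be a probability measure on $\mathbb{R}^d$ with density $f$ whose support is $K$ and with $\inf_{x\in K} f(x)>0$. There is a constant $c=c(K,\nu)$ such that, for any sequence $(r_n)$ with $r_n \geq c\left(\frac{\ln n}{n}\right)^{1/d}$, the random Vietoris--Rips complex $\mathcal{R}(n,r_n)$ is asymptotically almost surely contractible.
   Context: A convex body is a convex, compact set with nonempty interior. The random Vietoris--Rips complex $\mathcal{R}(n,r)$ is constructed by sampling $X_1,\dots,X_n$ i.i.d. according to $\nu$ and declaring a subset of these points a simplex if and only if all its pairwise Euclidean distances are at most $r$. A simplicial complex is contractible if its geometric realization is homotopy equivalent to a point. A sequence of events $E_n$ holds asymptotically almost surely (a.a.s.) if $\Pr(E_n)\to 1$ as $n\to\infty$. *)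

theory Defs
  imports "HOL-Analysis.Analysis" "HOL-Probability.Probability"
begin

definition convex_body :: "'a::euclidean_space set \<Rightarrow> bool" where
  "convex_body K \<longleftrightarrow> convex K \<and> compact K \<and> interior K \<noteq> {}"

definition vr_simplices :: "nat \<Rightarrow> real \<Rightarrow> (nat \<Rightarrow> 'a::metric_space) \<Rightarrow> nat set set" where
  "vr_simplices n r X =
     {\<sigma>. \<sigma> \<noteq> {} \<and> \<sigma> \<subseteq> {..<n} \<and> (\<forall>i\<in>\<sigma>. \<forall>j\<in>\<sigma>. dist (X i) (X j) \<le> r)}"

text \<open>Standard geometric realization of an abstract simplicial complex with
  vertex set contained in {0..n-1}, as a subset of the space of real sequences
  (product topology; all points live in the finite-dimensional coordinate space
  on {0..n-1}, where this is the Euclidean topology): the points with barycentric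
  coordinates whose support is a simplex.\<close>
definition geom_realization :: "nat \<Rightarrow> nat set set \<Rightarrow> (nat \<Rightarrow> real) set" where
  "geom_realization n S =
     {x. (\<forall>i. 0 \<le> x i) \<and> (\<forall>i. n \<le> i \<longrightarrow> x i = 0) \<and> (\<Sum>i<n. x i) = 1 \<and> {i. 0 < x i} \<in> S}"

definition vr_contractible :: "nat \<Rightarrow> real \<Rightarrow> (nat \<Rightarrow> 'a::metric_space) \<Rightarrow> bool" where
  "vr_contractible n r X \<longleftrightarrow> contractible (geom_realization n (vr_simplices n r X))"

end

theory Submission
  imports Defs "HOL-Real_Asymp.Real_Asymp"
begin


definition PV :: "nat \<Rightarrow> (nat \<Rightarrow> real) \<Rightarrow> bool" where
  "PV n x \<longleftrightarrow> (\<forall>i. 0 \<le> x i) \<and> (\<forall>i. n \<le> i \<longrightarrow> x i = 0) \<and> (\<Sum>i<n. x i) = 1"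

lemma in_realI:
  assumes "PV n a" "\<And>i j. 0 < a i \<Longrightarrow> 0 < a j \<Longrightarrow> dist (X i) (X j) \<le> r"
  shows "a \<in> geom_realization n (vr_simplices n r X)"
proof -
  have nn: "{i. 0 < a i} \<noteq> {}"
  proof
    assume "{i. 0 < a i} = {}"
    then have "\<And>i. a i = 0" using assms(1) unfolding PV_def by (metis empty_iff le_less mem_Collect_eq)
    then show False using assms(1) unfolding PV_def by simp
  qed
  have "{i. 0 < a i} \<subseteq> {..<n}" using assms(1) unfolding PV_def
    by (auto simp: not_less[symmetric])
  then show ?thesis using assms nn unfolding geom_realization_def vr_simplices_def PV_def by auto
qed

lemma in_realD:
  assumes "a \<in> geom_realization n (vr_simplices n r X)"
  shows "PV n a" "\<And>i j. 0 < a i \<Longrightarrow> 0 < a j \<Longrightarrow> dist (X i) (X j) \<le> r"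
  using assms unfolding geom_realization_def vr_simplices_def PV_def by auto

lemma comb_in:
  assumes "PV n a" "PV n b" "0 \<le> t" "t \<le> 1"
    "\<And>i j. (0 < a i \<or> 0 < b i) \<Longrightarrow> (0 < a j \<or> 0 < b j) \<Longrightarrow> dist (X i) (X j) \<le> r"
  shows "(\<lambda>i. (1-t) * a i + t * b i) \<in> geom_realization n (vr_simplices n r X)"
proof (rule in_realI)
  show "PV n (\<lambda>i. (1 - t) * a i + t * b i)"
    using assms(1-4) unfolding PV_def by (auto simp: sum.distrib sum_distrib_left[symmetric])
  have *: "0 < (1 - t) * a i + t * b i \<Longrightarrow> 0 < a i \<or> 0 < b i" for i
    using assms(1-4) unfolding PV_def
    by (metis add.right_neutral linorder_not_le mult_zero_right nle_le)
  show "dist (X i) (X j) \<le> r" if "0 < (1 - t) * a i + t * b i" "0 < (1 - t) * a j + t * b j" for i j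
    using assms(5) *[OF that(1)] *[OF that(2)] by blast
qed

lemma homot:
  fixes S :: "'b::topological_space set" and T :: "'c::topological_space set" and h :: "real \<times> 'b \<Rightarrow> 'c"
  assumes "continuous_on ({0..1} \<times> S) h" "h ` ({0..1} \<times> S) \<subseteq> T"
    "\<And>x. h (0, x) = p x" "\<And>x. h (1, x) = q x"
  shows "homotopic_with_canon (\<lambda>x. True) S T p q"
  apply (simp add: homotopic_with)
  apply (rule exI[of _ h])
  using assms by (auto simp: image_subset_iff Pi_iff)



lemma norm_add_sq: "(norm (a + b :: 'a::real_inner))^2 = (norm a)^2 + 2 * (a \<bullet> b) + (norm b)^2"
  by (simp add: power2_norm_eq_inner inner_add_left inner_add_right inner_commute)

lemma variance_bound:
  fixes X :: "nat \<Rightarrow> 'a::euclidean_space"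
  assumes pv: "PV n x" and pw: "\<And>i j. 0 < x i \<Longrightarrow> 0 < x j \<Longrightarrow> dist (X i) (X j) \<le> r" and r: "0 < r"
  shows "\<exists>i<n. 0 < x i \<and> dist (\<Sum>k<n. x k *\<^sub>R X k) (X i) \<le> 3*r/4"
proof (rule ccontr)
  assume H: "\<not> ?thesis"
  define m where "m = (\<Sum>k<n. x k *\<^sub>R X k)"
  define V where "V = (\<Sum>i<n. x i * (norm (X i - m))^2)"
  have nn: "\<And>i. 0 \<le> x i" and s1: "(\<Sum>i<n. x i) = 1" using pv unfolding PV_def by auto
  have z: "(\<Sum>i<n. x i *\<^sub>R (X i - m)) = 0"
    by (simp add: scaleR_diff_right sum_subtractf scaleR_sum_left[symmetric] s1 m_def)
  have zi: "(\<Sum>i<n. x i * ((X i - m) \<bullet> v)) = 0" for v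
  proof -
    have "(\<Sum>i<n. x i * ((X i - m) \<bullet> v)) = (\<Sum>i<n. x i *\<^sub>R (X i - m)) \<bullet> v"
      by (simp add: inner_sum_left)
    then show ?thesis using z by simp
  qed
  have k: "(\<Sum>i<n. x i * (norm (X i - X k))^2) = V + (norm (X k - m))^2" for k
  proof -
    have "(\<Sum>i<n. x i * (norm (X i - X k))^2)
        = (\<Sum>i<n. x i * (norm (X i - m))^2 + 2 * (x i * ((X i - m) \<bullet> (m - X k))) + x i * (norm (m - X k))^2)"
    proof (rule sum.cong[OF refl])
      fix i
      have "X i - X k = (X i - m) + (m - X k)" by simp
      then have "(norm (X i - X k))^2 = (norm (X i - m))^2 + 2 * ((X i - m) \<bullet> (m - X k)) + (norm (m - X k))^2"
        by (metis norm_add_sq)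
      then show "x i * (norm (X i - X k))^2 = x i * (norm (X i - m))^2 + 2 * (x i * ((X i - m) \<bullet> (m - X k))) + x i * (norm (m - X k))^2"
        by (metis distrib_left mult.left_commute)
    qed
    also have "\<dots> = V + 2 * (\<Sum>i<n. x i * ((X i - m) \<bullet> (m - X k))) + (\<Sum>i<n. x i) * (norm (m - X k))^2"
      by (simp add: sum.distrib sum_distrib_left sum_distrib_right V_def)
    also have "\<dots> = V + (norm (X k - m))^2" using zi s1 by (simp add: norm_minus_commute)
    finally show ?thesis .
  qed
  have "(\<Sum>k<n. x k * (\<Sum>i<n. x i * (norm (X i - X k))^2)) = (\<Sum>k<n. x k * V + x k * (norm (X k - m))^2)"
    using k by (simp add: algebra_simps)
  also have "\<dots> = 2 * V" using s1 by (simp add: sum.distrib sum_distrib_right[symmetric] V_def)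
  finally have e2: "(\<Sum>k<n. x k * (\<Sum>i<n. x i * (norm (X i - X k))^2)) = 2 * V" .
  have "(\<Sum>k<n. x k * (\<Sum>i<n. x i * (norm (X i - X k))^2)) = (\<Sum>k<n. \<Sum>i<n. x k * (x i * (norm (X i - X k))^2))"
    by (simp add: sum_distrib_left)
  also have "\<dots> \<le> (\<Sum>k<n. \<Sum>i<n. x k * (x i * r^2))"
  proof (intro sum_mono)
    fix k i
    show "x k * (x i * (norm (X i - X k))^2) \<le> x k * (x i * r^2)"
    proof (cases "0 < x i \<and> 0 < x k")
      case True
      then have "dist (X i) (X k) \<le> r" using pw by blast
      then have "norm (X i - X k) \<le> r" by (simp add: dist_norm)
      then have "(norm (X i - X k))^2 \<le> r^2" by (simp add: power_mono)
      then show ?thesis using nn by (simp add: mult_left_mono)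
    next
      case False
      then have "x i = 0 \<or> x k = 0" using nn by (metis less_eq_real_def)
      then show ?thesis by auto
    qed
  qed
  also have "\<dots> = r^2" using s1 by (simp add: sum_distrib_left[symmetric] sum_distrib_right[symmetric])
  finally have Vle: "2 * V \<le> r^2" using e2 by simp
  have "(\<Sum>i<n. x i * (9 * r^2 / 16)) \<le> V" unfolding V_def
  proof (intro sum_mono)
    fix i assume i: "i \<in> {..<n}"
    show "x i * (9 * r^2 / 16) \<le> x i * (norm (X i - m))^2"
    proof (cases "0 < x i")
      case True
      then have "dist m (X i) > 3*r/4" using H i m_def by auto
      then have "norm (X i - m) \<ge> 3*r/4" by (simp add: dist_norm norm_minus_commute)
      then have "(3*r/4)^2 \<le> (norm (X i - m))^2" using r by (intro power_mono) auto
      then show ?thesis using nn by (intro mult_left_mono) (auto simp: power2_eq_square)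
    next
      case False
      then show ?thesis using nn[of i] by simp
    qed
  qed
  moreover have "(\<Sum>i<n. x i * (9 * r^2 / 16)) = 9 * r^2 / 16"
    using s1 by (simp only: sum_distrib_right[symmetric])
  ultimately have "9 * r^2 / 16 \<le> V" by simp
  moreover have "0 < r * r" using r by simp
  ultimately show False using Vle by (simp add: power2_eq_square)
qed



lemma coord_cont: "continuous_on A (\<lambda>x::nat\<Rightarrow>real. x i)"
  by (rule continuous_on_subset[OF continuous_on_product_coordinates]) simp

lemma DL:
  fixes X :: "nat \<Rightarrow> 'a::euclidean_space" and C :: "'a set"
  assumes C: "convex C" and n: "0 < n" and r: "0 < r" and XC: "\<And>j. j<n \<Longrightarrow> X j \<in> C"
    and cov: "\<And>z. z\<in>C \<Longrightarrow> \<exists>j<n. dist z (X j) < r/5"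
  shows "vr_contractible n r X"
proof -
  define S where "S = geom_realization n (vr_simplices n r X)"
  define f where "f x = (\<Sum>k<n. x k *\<^sub>R X k)" for x :: "nat \<Rightarrow> real"
  define e where "e = r/5"
  define w where "w y j = max 0 (e - dist y (X j))" for y j
  define W where "W y = (\<Sum>j<n. w y j)" for y
  define g where "g y = (\<lambda>j. if j < n then w y j / W y else 0)" for y
  define \<phi> where "\<phi> t = min 1 (max 0 ((4*r/5 - t) * 20 / r))" for t :: real
  define u where "u x i = x i * \<phi> (dist (f x) (X i))" for x i
  define U where "U x = (\<Sum>i<n. u x i)" for x
  define \<psi> where "\<psi> x = (\<lambda>i. u x i / U x)" for x
  have contf: "continuous_on A f" for A
    unfolding f_def by (intro continuous_intros coord_cont)
  have fC: "f x \<in> C" if "x \<in> S" for x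
    unfolding f_def using in_realD(1)[OF that[unfolded S_def]] XC
    by (intro convex_sum[OF _ C]) (auto simp: PV_def)
  have wnn: "0 \<le> w y j" for y j by (simp add: w_def)
  have Wpos: "0 < W y" if yC: "y \<in> C" for y
  proof -
    obtain j where j: "j < n" "dist y (X j) < e" using cov[OF yC] e_def by auto
    show ?thesis unfolding W_def by (rule sum_pos2[of _ j]) (use j wnn in \<open>auto simp: w_def\<close>)
  qed
  have gPV: "PV n (g y)" if "y \<in> C" for y
    using Wpos[OF that] wnn unfolding PV_def g_def
    by (auto simp: sum_divide_distrib[symmetric] W_def)
  have gsupp: "j < n \<and> dist y (X j) < e" if "0 < g y j" for y j
    using that by (auto simp: g_def w_def zero_less_divide_iff split: if_splits)
  have gS: "g y \<in> S" if "y \<in> C" for y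
    unfolding S_def
  proof (rule in_realI[OF gPV[OF that]])
    fix i j assume "0 < g y i" "0 < g y j"
    then have "dist y (X i) < e" "dist y (X j) < e" using gsupp by auto
    then have "dist (X i) (X j) < 2 * e" by (metis dist_commute dist_triangle_less_add mult_2)
    then show "dist (X i) (X j) \<le> r" using e_def r by simp
  qed
  have contw: "continuous_on A (\<lambda>y. w y j)" for A j
    unfolding w_def by (intro continuous_intros)
  have contW: "continuous_on A W" for A
    unfolding W_def by (intro continuous_intros contw)
  have contg: "continuous_on C g"
  proof (rule continuous_on_coordinatewise_then_product)
    fix j
    show "continuous_on C (\<lambda>y. g y j)"
    proof (cases "j < n")
      case True
      then show ?thesis unfolding g_def using Wpos
        by (auto intro!: continuous_intros contw contW simp: less_irrefl dest!: Wpos)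
    next
      case False
      then show ?thesis unfolding g_def by simp
    qed
  qed
  have xS: "PV n x" "\<And>i j. 0 < x i \<Longrightarrow> 0 < x j \<Longrightarrow> dist (X i) (X j) \<le> r" if "x \<in> S" for x
    using in_realD[OF that[unfolded S_def]] by auto
  have \<phi>nn: "0 \<le> \<phi> t" for t by (simp add: \<phi>_def)
  have unn: "0 \<le> u x i" if "x \<in> S" for x i
    using xS(1)[OF that] \<phi>nn unfolding u_def PV_def by simp
  have Upos: "0 < U x" if xS0: "x \<in> S" for x
  proof -
    obtain i where i: "i < n" "0 < x i" "dist (f x) (X i) \<le> 3*r/4"
      using variance_bound[of n x X r, OF xS(1)[OF xS0] xS(2)[OF xS0] r] f_def by auto
    have "(4*r/5 - dist (f x) (X i)) * 20 / r \<ge> 1" using i(3) r by (simp add: field_simps)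
    then have "\<phi> (dist (f x) (X i)) = 1" by (simp add: \<phi>_def)
    then have "0 < u x i" using i by (simp add: u_def)
    then show ?thesis unfolding U_def by (intro sum_pos2[of _ i]) (use i unn xS0 in auto)
  qed
  have \<psi>PV: "PV n (\<psi> x)" if "x \<in> S" for x
    using Upos[OF that] unn[OF that] xS(1)[OF that] unfolding PV_def \<psi>_def
    by (auto simp: sum_divide_distrib[symmetric] U_def u_def)
  have \<psi>supp: "0 < x i \<and> dist (f x) (X i) < 4*r/5" if "x \<in> S" "0 < \<psi> x i" for x i
  proof -
    have "0 < u x i" using that Upos[OF that(1)] by (simp add: \<psi>_def zero_less_divide_iff)
    then have "0 < x i" "0 < \<phi> (dist (f x) (X i))" using xS(1)[OF that(1)] \<phi>nn
      unfolding u_def PV_def by (auto simp: zero_less_mult_iff dest: leD)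
    moreover have "dist (f x) (X i) < 4*r/5"
    proof -
      let ?t = "dist (f x) (X i)"
      have "0 < min 1 (max 0 ((4*r/5 - ?t) * 20 / r))" using calculation(2) by (simp add: \<phi>_def)
      then have "0 < (4*r/5 - ?t) * 20 / r" by (simp add: less_max_iff_disj)
      then have "0 < (4*r/5 - ?t)" using r by (simp add: zero_less_divide_iff zero_less_mult_iff)
      then show ?thesis by simp
    qed
    ultimately show ?thesis by simp
  qed
  have cont\<phi>: "continuous_on A \<phi>" for A unfolding \<phi>_def using r by (intro continuous_intros) auto
  have contu: "continuous_on A (\<lambda>x. u x i)" for A i
    unfolding u_def by (intro continuous_intros coord_cont continuous_on_compose2[OF cont\<phi>] contf) auto
  have contU: "continuous_on A U" for A
    unfolding U_def by (intro continuous_intros contu)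
  have cont\<psi>: "continuous_on S \<psi>"
    unfolding \<psi>_def using Upos by (intro continuous_intros contu contU) (auto dest!: Upos)
  have csnd: "continuous_on ({0..1::real} \<times> S) (\<lambda>z. snd z i)" for i
    by (rule continuous_on_compose2[OF coord_cont[of UNIV i] continuous_on_snd]) auto
  have c\<psi>: "continuous_on ({0..1::real} \<times> S) (\<lambda>z. \<psi> (snd z) i)" for i
    by (rule continuous_on_compose2[OF continuous_on_product_then_coordinatewise[OF cont\<psi>] continuous_on_snd]) auto
  have contgf: "continuous_on S (\<lambda>x. g (f x))"
    by (rule continuous_on_compose2[OF contg contf]) (use fC in auto)
  have cgf: "continuous_on ({0..1::real} \<times> S) (\<lambda>z. g (f (snd z)) i)" for i
    by (rule continuous_on_compose2[OF continuous_on_product_then_coordinatewise[OF contgf] continuous_on_snd]) auto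
  have h1: "homotopic_with_canon (\<lambda>x. True) S S id \<psi>"
  proof (rule homot[where h = "\<lambda>z. \<lambda>i. (1 - fst z) * snd z i + fst z * \<psi> (snd z) i"])
    show "continuous_on ({0..1} \<times> S) (\<lambda>z. \<lambda>i. (1 - fst z) * snd z i + fst z * \<psi> (snd z) i)"
      by (intro continuous_on_coordinatewise_then_product continuous_intros csnd c\<psi>)
    show "(\<lambda>z. \<lambda>i. (1 - fst z) * snd z i + fst z * \<psi> (snd z) i) ` ({0..1} \<times> S) \<subseteq> S"
    proof clarsimp
      fix t :: real and x assume t: "0 \<le> t" "t \<le> 1" and x: "x \<in> S"
      show "(\<lambda>i. (1 - t) * x i + t * \<psi> x i) \<in> S"
        unfolding S_def
      proof (rule comb_in[OF xS(1)[OF x] \<psi>PV[OF x] t])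
        fix i j assume "0 < x i \<or> 0 < \<psi> x i" "0 < x j \<or> 0 < \<psi> x j"
        then have "0 < x i" "0 < x j" using \<psi>supp[OF x] by auto
        then show "dist (X i) (X j) \<le> r" using xS(2)[OF x] by blast
      qed
    qed
  qed auto
  have h2: "homotopic_with_canon (\<lambda>x. True) S S \<psi> (\<lambda>x. g (f x))"
  proof (rule homot[where h = "\<lambda>z. \<lambda>i. (1 - fst z) * \<psi> (snd z) i + fst z * g (f (snd z)) i"])
    show "continuous_on ({0..1} \<times> S) (\<lambda>z. \<lambda>i. (1 - fst z) * \<psi> (snd z) i + fst z * g (f (snd z)) i)"
      by (intro continuous_on_coordinatewise_then_product continuous_intros cgf c\<psi>)
    show "(\<lambda>z. \<lambda>i. (1 - fst z) * \<psi> (snd z) i + fst z * g (f (snd z)) i) ` ({0..1} \<times> S) \<subseteq> S"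
    proof clarsimp
      fix t :: real and x assume t: "0 \<le> t" "t \<le> 1" and x: "x \<in> S"
      show "(\<lambda>i. (1 - t) * \<psi> x i + t * g (f x) i) \<in> S"
        unfolding S_def
      proof (rule comb_in[OF \<psi>PV[OF x] gPV[OF fC[OF x]] t])
        fix i j assume i: "0 < \<psi> x i \<or> 0 < g (f x) i" and j: "0 < \<psi> x j \<or> 0 < g (f x) j"
        have di: "dist (f x) (X i) < 4*r/5"
        proof (cases "0 < \<psi> x i")
          case True then show ?thesis using \<psi>supp[OF x] by blast
        next
          case False then have "0 < g (f x) i" using i by blast
          then have "dist (f x) (X i) < e" using gsupp by blast
          then show ?thesis using e_def r by simp
        qed
        have dj: "dist (f x) (X j) < 4*r/5"
        proof (cases "0 < \<psi> x j")
          case True then show ?thesis using \<psi>supp[OF x] by blast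
        next
          case False then have "0 < g (f x) j" using j by blast
          then have "dist (f x) (X j) < e" using gsupp by blast
          then show ?thesis using e_def r by simp
        qed
        show "dist (X i) (X j) \<le> r"
        proof (cases "0 < \<psi> x i")
          case True note Ti = this
          show ?thesis
          proof (cases "0 < \<psi> x j")
            case True
            then show ?thesis using Ti \<psi>supp[OF x] xS(2)[OF x] by blast
          next
            case False
            then have "dist (f x) (X j) < r/5" using j gsupp e_def by auto
            then show ?thesis using di dist_triangle[of "X i" "X j" "f x"] dist_commute[of "X i" "f x"] by linarith
          qed
        next
          case False
          then have "dist (f x) (X i) < r/5" using i gsupp e_def by auto
          then show ?thesis using dj dist_triangle[of "X i" "X j" "f x"] dist_commute[of "X i" "f x"] by linarith
        qed
      qed
    qed
  qed auto
  have h3: "homotopic_with_canon (\<lambda>x. True) S S (\<lambda>x. g (f x)) (\<lambda>x. g (X 0))"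
  proof (rule homot[where h = "\<lambda>z. g ((1 - fst z) *\<^sub>R f (snd z) + fst z *\<^sub>R X 0)"])
    have X0: "X 0 \<in> C" using XC n by auto
    have inC: "(1 - fst z) *\<^sub>R f (snd z) + fst z *\<^sub>R X 0 \<in> C" if "z \<in> {0..1} \<times> S" for z
      using that fC X0 C unfolding convex_alt by auto
    show "continuous_on ({0..1} \<times> S) (\<lambda>z. g ((1 - fst z) *\<^sub>R f (snd z) + fst z *\<^sub>R X 0))"
      by (rule continuous_on_compose2[OF contg]) (use inC in \<open>auto intro!: continuous_intros continuous_on_compose2[OF contf] csnd\<close>)
    show "(\<lambda>z. g ((1 - fst z) *\<^sub>R f (snd z) + fst z *\<^sub>R X 0)) ` ({0..1} \<times> S) \<subseteq> S"
      using inC gS by auto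
  qed auto
  have "homotopic_with_canon (\<lambda>x. True) S S id (\<lambda>x. g (X 0))"
    using homotopic_with_trans[OF homotopic_with_trans[OF h1 h2] h3] .
  then show ?thesis unfolding vr_contractible_def contractible_def S_def by blast
qed


lemma ball_lower:
  fixes K :: "'a::euclidean_space set" and \<nu> :: "'a measure" and f :: "'a \<Rightarrow> real"
  assumes cb: "convex_body K" and fm: "f \<in> borel_measurable borel"
    and fK: "\<forall>x\<in>K. \<delta> \<le> f x" and \<delta>: "0 < \<delta>"
    and \<nu>: "\<nu> = density lborel (\<lambda>x. ennreal (f x))" and ps: "prob_space \<nu>"
  shows "\<exists>\<kappa>>0. \<exists>\<rho>0>0. \<forall>y\<in>K. \<forall>\<rho>. 0 < \<rho> \<and> \<rho> \<le> \<rho>0 \<longrightarrow> \<kappa> * \<rho> ^ DIM('a) \<le> measure \<nu> (ball y \<rho>)"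
proof -
  have cK: "convex K" and kK: "compact K" and iK: "interior K \<noteq> {}" using cb by (auto simp: convex_body_def)
  obtain x0 where x0: "x0 \<in> interior K" using iK by auto
  obtain R0 where R0: "R0 > 0" "ball x0 R0 \<subseteq> K" using x0 mem_interior by blast
  obtain D0 where D0: "\<forall>y\<in>K. dist x0 y \<le> D0" using compact_imp_bounded[OF kK] bounded_any_center by blast
  define D where "D = max D0 0"
  have D: "\<forall>y\<in>K. dist x0 y \<le> D" "0 \<le> D" using D0 by (auto simp: D_def)
  define \<kappa> where "\<kappa> = \<delta> * (R0/(R0+D)) ^ DIM('a) * measure lborel (ball (0::'a) 1)"
  have "\<kappa> > 0" unfolding \<kappa>_def using \<delta> R0 D content_ball_pos[of 1 "0::'a"] by auto
  moreover have "0 < R0 + D" using R0 D by simp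
  moreover have "\<kappa> * \<rho> ^ DIM('a) \<le> measure \<nu> (ball y \<rho>)" if y: "y \<in> K" and \<rho>: "0 < \<rho>" "\<rho> \<le> R0 + D" for y \<rho>
  proof -
    define t where "t = \<rho> / (R0 + D)"
    have t: "0 < t" "t \<le> 1" using \<rho> R0 D by (auto simp: t_def)
    define c where "c = y + t *\<^sub>R (x0 - y)"
    define B where "B = ball c (t * R0)"
    have BK: "B \<subseteq> K"
    proof
      fix z assume "z \<in> B"
      then have zc: "norm (z - c) < t * R0" by (simp add: B_def dist_norm norm_minus_commute)
      define z' where "z' = x0 + (1/t) *\<^sub>R (z - c)"
      have "dist x0 z' = (1/t) * norm (z - c)" using t by (simp add: z'_def dist_norm)
      also have "\<dots> < R0" using zc t by (simp add: field_simps)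
      finally have "z' \<in> K" using R0 by auto
      moreover have "z = (1 - t) *\<^sub>R y + t *\<^sub>R z'"
        using t by (simp add: z'_def c_def algebra_simps)
      ultimately show "z \<in> K" using y t cK unfolding convex_alt by auto
    qed
    have Bb: "B \<subseteq> ball y \<rho>"
    proof
      fix z assume "z \<in> B"
      then have "dist c z < t * R0" by (simp add: B_def)
      moreover have "dist y c = t * dist x0 y" using t by (simp add: c_def dist_norm norm_minus_commute)
      moreover have "t * dist x0 y \<le> t * D" using D y t by (simp add: mult_left_mono)
      ultimately have "dist y z < t * (R0 + D)" using dist_triangle[of y z c] by (simp add: algebra_simps)
      then show "z \<in> ball y \<rho>" using t R0 D by (simp add: t_def)
    qed
    have fmeas: "(\<lambda>x. ennreal (f x)) \<in> borel_measurable lborel" using fm by simp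
    have "emeasure \<nu> (ball y \<rho>) = (\<integral>\<^sup>+x. ennreal (f x) * indicator (ball y \<rho>) x \<partial>lborel)"
      unfolding \<nu> by (rule emeasure_density[OF fmeas]) simp
    also have "\<dots> \<ge> (\<integral>\<^sup>+x. ennreal \<delta> * indicator B x \<partial>lborel)"
    proof (rule nn_integral_mono)
      fix x show "ennreal \<delta> * indicator B x \<le> ennreal (f x) * indicator (ball y \<rho>) x"
        using BK Bb fK by (auto simp: indicator_def intro!: ennreal_leI)
    qed
    moreover have "(\<integral>\<^sup>+x. ennreal \<delta> * indicator B x \<partial>lborel) = ennreal \<delta> * emeasure lborel B"
      by (rule nn_integral_cmult_indicator) (simp add: B_def)
    moreover have "emeasure lborel B = ennreal (measure lborel B)"
      using emeasure_lborel_ball_finite[of c "t*R0"] unfolding B_def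
      by (simp add: emeasure_eq_ennreal_measure)
    ultimately have E: "ennreal \<delta> * ennreal (measure lborel B) \<le> emeasure \<nu> (ball y \<rho>)" by simp
    have "measure lborel B = (t * R0) ^ DIM('a) * measure lborel (ball (0::'a) 1)"
      unfolding B_def using t R0 by (intro content_ball_conv_unit_ball) simp
    moreover have "\<delta> * ((t * R0) ^ DIM('a) * measure lborel (ball (0::'a) 1)) = \<kappa> * \<rho> ^ DIM('a)"
      unfolding \<kappa>_def t_def by (simp add: power_mult_distrib power_divide field_simps)
    ultimately have dm: "\<delta> * measure lborel B = \<kappa> * \<rho> ^ DIM('a)" by simp
    have "ennreal \<delta> * ennreal (measure lborel B) = ennreal (\<delta> * measure lborel B)"
      using \<delta> by (simp add: ennreal_mult measure_nonneg)
    then have "ennreal \<delta> * ennreal (measure lborel B) = ennreal (\<kappa> * \<rho> ^ DIM('a))" using dm by simp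
    then have "ennreal (\<kappa> * \<rho> ^ DIM('a)) \<le> emeasure \<nu> (ball y \<rho>)" using E by simp
    also have "\<dots> = ennreal (measure \<nu> (ball y \<rho>))"
      using finite_measure.emeasure_eq_measure[OF prob_space.axioms(1)[OF ps]] by blast
    finally show ?thesis by (simp add: ennreal_le_iff)
  qed
  ultimately show ?thesis by blast
qed



lemma packing:
  fixes K :: "'a::metric_space set" and \<nu> :: "'a measure"
  assumes ps: "prob_space \<nu>" and sb: "sets \<nu> = sets borel" and q: "0 < q" and \<rho>: "0 < \<rho>"
    and lb: "\<forall>y\<in>K. q \<le> measure \<nu> (ball y (\<rho>/2))"
  shows "\<exists>Y. finite Y \<and> Y \<subseteq> K \<and> real (card Y) * q \<le> 1 \<and> (\<forall>z\<in>K. \<exists>y\<in>Y. dist z y < \<rho>)"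
proof -
  interpret prob_space \<nu> by (rule ps)
  define sep where "sep T \<longleftrightarrow> finite T \<and> T \<subseteq> K \<and> (\<forall>a\<in>T. \<forall>b\<in>T. a \<noteq> b \<longrightarrow> \<rho> \<le> dist a b)" for T
  have cardb: "real (card T) * q \<le> 1" if "sep T" for T
  proof -
    have fT: "finite T" and TK: "T \<subseteq> K" and sp: "\<forall>a\<in>T. \<forall>b\<in>T. a \<noteq> b \<longrightarrow> \<rho> \<le> dist a b"
      using that by (auto simp: sep_def)
    have disj: "disjoint_family_on (\<lambda>a. ball a (\<rho>/2)) T"
      unfolding disjoint_family_on_def
    proof (intro ballI impI)
      fix a b assume ab: "a \<in> T" "b \<in> T" "a \<noteq> b"
      show "ball a (\<rho>/2) \<inter> ball b (\<rho>/2) = {}"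
      proof (rule ccontr)
        assume "ball a (\<rho>/2) \<inter> ball b (\<rho>/2) \<noteq> {}"
        then obtain z where "dist a z < \<rho>/2" "dist b z < \<rho>/2" by auto
        then have "dist a b < \<rho>" using dist_triangle[of a b z] dist_commute[of b z] by linarith
        then show False using sp ab by force
      qed
    qed
    have "real (card T) * q = (\<Sum>a\<in>T. q)" by simp
    also have "\<dots> \<le> (\<Sum>a\<in>T. measure \<nu> (ball a (\<rho>/2)))" using lb TK by (intro sum_mono) auto
    also have "\<dots> = measure \<nu> (\<Union>a\<in>T. ball a (\<rho>/2))"
      by (rule finite_measure_finite_Union[symmetric]) (use fT disj in \<open>auto simp: sb\<close>)
    also have "\<dots> \<le> 1" by simp
    finally show ?thesis .
  qed
  define M where "M = nat \<lceil>1/q\<rceil>"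
  have cM: "card T \<le> M" if "sep T" for T
  proof -
    have "real (card T) \<le> 1/q" using cardb[OF that] q by (simp add: field_simps)
    then show ?thesis unfolding M_def by linarith
  qed
  define CS where "CS = card ` {T. sep T}"
  have "CS \<subseteq> {..M}" unfolding CS_def using cM by blast
  then have fCS: "finite CS" using finite_subset by blast
  have "sep {}" by (simp add: sep_def)
  then have neCS: "CS \<noteq> {}" unfolding CS_def by auto
  obtain T where T: "sep T" "card T = Max CS"
    using Max_in[OF fCS neCS] unfolding CS_def by auto
  have "\<forall>z\<in>K. \<exists>y\<in>T. dist z y < \<rho>"
  proof (rule ccontr)
    assume "\<not> ?thesis"
    then obtain z where z: "z \<in> K" "\<forall>y\<in>T. \<rho> \<le> dist z y" by (auto simp: not_less)
    have zT: "z \<notin> T" using z \<rho> by force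
    have "sep (insert z T)" using T(1) z zT unfolding sep_def by (auto simp: dist_commute)
    then have "card (insert z T) \<in> CS" unfolding CS_def by auto
    then have "card (insert z T) \<le> Max CS" using fCS by simp
    moreover have "card (insert z T) = Suc (card T)" using zT T(1) by (simp add: sep_def)
    ultimately show False using T(2) by simp
  qed
  moreover have "finite T" "T \<subseteq> K" using T(1) unfolding sep_def by auto
  ultimately show ?thesis using cardb[OF T(1)] by blast
qed



lemma comp_meas:
  fixes \<nu> :: "'a::metric_space measure"
  assumes sb: "sets \<nu> = sets borel"
  shows "(\<lambda>X. X i) \<in> borel_measurable (PiM {..<n} (\<lambda>_. \<nu>))"
proof (cases "i < n")
  case True
  have "(\<lambda>X. X i) \<in> measurable (PiM {..<n} (\<lambda>_. \<nu>)) \<nu>"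
    using True by (intro measurable_component_singleton) auto
  then show ?thesis using sb measurable_cong_sets by blast
next
  case False
  have "(\<lambda>X. undefined) \<in> borel_measurable (PiM {..<n} (\<lambda>_. \<nu>))" by simp
  then show ?thesis
    by (rule measurable_cong[THEN iffD1, rotated]) (use False in \<open>auto simp: space_PiM PiE_def extensional_def\<close>)
qed

lemma meas_contr:
  fixes \<nu> :: "'a::euclidean_space measure"
  assumes sb: "sets \<nu> = sets borel"
  shows "{X \<in> space (PiM {..<n} (\<lambda>_. \<nu>)). vr_contractible n r X} \<in> sets (PiM {..<n} (\<lambda>_. \<nu>))"
proof -
  define M where "M = PiM {..<n} (\<lambda>_. \<nu>)"
  define R where "R X = {(i,j). i<n \<and> j<n \<and> dist (X i) (X j) \<le> r}" for X :: "nat \<Rightarrow> 'a"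
  define Q where "Q E = contractible (geom_realization n {\<sigma>. \<sigma>\<noteq>{} \<and> \<sigma> \<subseteq> {..<n} \<and> \<sigma>\<times>\<sigma> \<subseteq> E})" for E
  have key: "vr_contractible n r X = Q (R X)" for X
  proof -
    have "vr_simplices n r X = {\<sigma>. \<sigma>\<noteq>{} \<and> \<sigma> \<subseteq> {..<n} \<and> \<sigma>\<times>\<sigma> \<subseteq> R X}"
      unfolding vr_simplices_def R_def by auto
    then show ?thesis unfolding vr_contractible_def Q_def by simp
  qed
  define P where "P = {..<n} \<times> {..<n}"
  have eq: "{X \<in> space M. vr_contractible n r X} = (\<Union>E\<in>{E\<in>Pow P. Q E}. {X \<in> space M. R X = E})"
    unfolding key P_def R_def by auto
  have RE: "{X \<in> space M. R X = E} = {X \<in> space M. \<forall>i\<in>{..<n}. \<forall>j\<in>{..<n}. ((i,j) \<in> E) = (dist (X i) (X j) \<le> r)}"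
    if "E \<subseteq> P" for E
    using that unfolding R_def P_def by auto
  have cm: "\<And>i. (\<lambda>X. X i) \<in> borel_measurable M" unfolding M_def by (rule comp_meas[OF sb])
  have dm[measurable]: "(\<lambda>X. dist (X i) (X j)) \<in> borel_measurable M" for i j
    by (intro borel_measurable_dist cm)
  have "{X \<in> space M. \<forall>i\<in>{..<n}. \<forall>j\<in>{..<n}. ((i,j) \<in> E) = (dist (X i) (X j) \<le> r)} \<in> sets M" for E
    by measurable
  then have "{X \<in> space M. R X = E} \<in> sets M" if "E \<subseteq> P" for E using RE[OF that] by simp
  moreover have "finite {E\<in>Pow P. Q E}" unfolding P_def by simp
  ultimately have "(\<Union>E\<in>{E\<in>Pow P. Q E}. {X \<in> space M. R X = E}) \<in> sets M"
    by (intro sets.finite_UN) auto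
  then show ?thesis using eq M_def by simp
qed



lemma PiM_collect_measure:
  fixes \<nu> :: "'a measure" and n :: nat
  assumes ps: "prob_space \<nu>" and J: "J \<subseteq> {..<n}" and A: "\<And>i. i \<in> J \<Longrightarrow> A i \<in> sets \<nu>"
  shows "measure (PiM {..<n} (\<lambda>_. \<nu>)) {X \<in> space (PiM {..<n} (\<lambda>_. \<nu>)). \<forall>i\<in>J. X i \<in> A i}
       = (\<Prod>i\<in>J. measure \<nu> (A i))"
proof -
  interpret PP: product_prob_space "\<lambda>_. \<nu>" "{..<n}" by (rule product_prob_spaceI) (rule ps)
  have fJ: "finite J" using J by (rule finite_subset) simp
  have "emeasure (PiM {..<n} (\<lambda>_. \<nu>)) {X \<in> space (PiM {..<n} (\<lambda>_. \<nu>)). \<forall>i\<in>J. X i \<in> A i}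
      = (\<Prod>i\<in>J. emeasure \<nu> (A i))"
    by (rule PP.emeasure_PiM_Collect[OF J fJ A])
  also have "\<dots> = (\<Prod>i\<in>J. ennreal (measure \<nu> (A i)))" by (simp add: finite_measure.emeasure_eq_measure[OF prob_space.axioms(1)[OF ps]])
  also have "\<dots> = ennreal (\<Prod>i\<in>J. measure \<nu> (A i))" by (simp add: prod_ennreal)
  finally show ?thesis unfolding measure_def by (simp add: prod_nonneg)
qed

lemma core:
  fixes \<nu> :: "'a::euclidean_space measure" and K :: "'a set"
  assumes ps: "prob_space \<nu>" and sb: "sets \<nu> = sets borel" and spU: "space \<nu> = UNIV"
    and cK: "convex K" and Km: "- K \<in> sets \<nu>" and nK: "measure \<nu> (- K) = 0"
    and LB: "\<forall>y\<in>K. \<forall>\<rho>. 0 < \<rho> \<and> \<rho> \<le> \<rho>0 \<longrightarrow> \<kappa> * \<rho> ^ DIM('a) \<le> measure \<nu> (ball y \<rho>)"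
    and \<kappa>: "0 < \<kappa>" and \<rho>0: "0 < \<rho>0" and n: "0 < n" and rn: "0 < rn" and q: "0 < q"
    and qle: "q \<le> \<kappa> * (min (rn/10) \<rho>0) ^ DIM('a)"
  shows "1 - 2 ^ DIM('a) / q * exp (- (real n * q))
         \<le> measure (PiM {..<n} (\<lambda>_. \<nu>)) {X \<in> space (PiM {..<n} (\<lambda>_. \<nu>)). vr_contractible n rn X}"
proof -
  define d where "d = DIM('a)"
  define P where "P = PiM {..<n} (\<lambda>_. \<nu>)"
  interpret PP: prob_space P unfolding P_def by (rule prob_space_PiM) (rule ps)
  interpret N: prob_space \<nu> by (rule ps)
  define \<rho> where "\<rho> = min (rn/10) \<rho>0"
  have \<rho>: "0 < \<rho>" "\<rho> \<le> \<rho>0" "\<rho> \<le> rn/10" using rn \<rho>0 by (auto simp: \<rho>_def)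
  have lbh: "\<forall>y\<in>K. \<kappa> * (\<rho>/2) ^ d \<le> measure \<nu> (ball y (\<rho>/2))"
    using LB[rule_format, of _ "\<rho>/2"] \<rho> unfolding d_def by simp
  have qp: "0 < \<kappa> * (\<rho>/2) ^ d" using \<kappa> \<rho> by simp
  obtain Y where Y: "finite Y" "Y \<subseteq> K" "real (card Y) * (\<kappa> * (\<rho>/2) ^ d) \<le> 1"
      "\<forall>z\<in>K. \<exists>y\<in>Y. dist z y < \<rho>"
    using packing[OF ps sb qp \<rho>(1) lbh] by blast
  have qle': "q \<le> \<kappa> * \<rho> ^ d" using qle unfolding \<rho>_def d_def .
  have cardY: "real (card Y) \<le> 2 ^ d / q"
  proof -
    have "real (card Y) * (\<kappa> * \<rho> ^ d) \<le> 2 ^ d"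
      using Y(3) by (simp add: power_divide field_simps)
    then have "real (card Y) * q \<le> 2 ^ d"
      using qle' mult_left_mono[OF qle', of "real (card Y)"] by linarith
    then show ?thesis using q by (simp add: field_simps)
  qed
  define B where "B y = {X \<in> space P. \<forall>j\<in>{..<n}. X j \<in> - ball y \<rho>}" for y
  define E where "E j = {X \<in> space P. \<forall>i\<in>{j}. X i \<in> - K}" for j
  have cm[measurable]: "\<And>i. (\<lambda>X. X i) \<in> borel_measurable P" unfolding P_def by (rule comp_meas[OF sb])
  have Kb[measurable]: "- K \<in> sets borel" using Km sb by simp
  have Bm: "B y \<in> sets P" for y unfolding B_def by measurable
  have Em: "E j \<in> sets P" for j unfolding E_def by measurable
  have mB: "measure P (B y) \<le> exp (- (real n * q))" if "y \<in> Y" for y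
  proof -
    have m0: "measure P (B y) = (\<Prod>j\<in>{..<n}. measure \<nu> (- ball y \<rho>))"
      unfolding B_def P_def by (rule PiM_collect_measure[OF ps]) (auto simp: sb)
    have "measure \<nu> (- ball y \<rho>) = 1 - measure \<nu> (ball y \<rho>)"
      using N.prob_compl[of "ball y \<rho>"] spU sb by (simp add: Compl_eq_Diff_UNIV)
    then have m1: "measure P (B y) = (1 - measure \<nu> (ball y \<rho>)) ^ n" using m0 by simp
    have lb: "\<kappa> * \<rho> ^ d \<le> measure \<nu> (ball y \<rho>)" using LB[rule_format, of y \<rho>] \<rho> Y(2) that unfolding d_def by auto
    have le1: "measure \<nu> (ball y \<rho>) \<le> 1" by simp
    have h1: "(1 - measure \<nu> (ball y \<rho>)) ^ n \<le> (1 - q) ^ n"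
      using lb le1 qle' by (intro power_mono) auto
    have q1: "q \<le> 1" using lb le1 qle' by linarith
    have h2: "(1 - q) ^ n \<le> (exp (- q)) ^ n"
      using exp_ge_add_one_self[of "-q"] q1 by (intro power_mono) auto
    have h3: "(exp (- q)) ^ n = exp (- (real n * q))" by (simp add: exp_of_nat_mult[symmetric])
    show ?thesis using m1 h1 h2 h3 by linarith
  qed
  have mE: "measure P (E j) = 0" if "j < n" for j
  proof -
    have "measure P (E j) = (\<Prod>i\<in>{j}. measure \<nu> (- K))"
      unfolding E_def P_def by (rule PiM_collect_measure[OF ps]) (use that Km in auto)
    then show ?thesis using nK by simp
  qed
  define bad where "bad = (\<Union>y\<in>Y. B y) \<union> (\<Union>j\<in>{..<n}. E j)"
  have badm: "bad \<in> sets P" unfolding bad_def using Bm Em Y(1)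
    by (intro sets.Un sets.finite_UN) auto
  have "measure P bad \<le> measure P (\<Union>y\<in>Y. B y) + measure P (\<Union>j\<in>{..<n}. E j)"
    unfolding bad_def by (rule measure_Un_le) (use Bm Em Y(1) in \<open>auto intro!: sets.finite_UN\<close>)
  also have "\<dots> \<le> (\<Sum>y\<in>Y. measure P (B y)) + (\<Sum>j\<in>{..<n}. measure P (E j))"
    by (intro add_mono PP.finite_measure_subadditive_finite) (use Bm Em Y(1) in auto)
  also have "\<dots> \<le> (\<Sum>y\<in>Y. exp (- (real n * q))) + 0"
    using mB mE by (intro add_mono sum_mono) auto
  also have "\<dots> = real (card Y) * exp (- (real n * q))" by simp
  also have "\<dots> \<le> 2 ^ d / q * exp (- (real n * q))"
    using cardY by (intro mult_right_mono) auto
  finally have mbad: "measure P bad \<le> 2 ^ d / q * exp (- (real n * q))" .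
  have sub: "space P - bad \<subseteq> {X \<in> space P. vr_contractible n rn X}"
  proof clarify
    fix X assume X: "X \<in> space P" "X \<notin> bad"
    have XK: "X j \<in> K" if "j < n" for j
      using X that unfolding bad_def E_def by auto
    have Xc: "\<forall>y\<in>Y. \<exists>j<n. X j \<in> ball y \<rho>"
      using X unfolding bad_def B_def by auto
    show "vr_contractible n rn X"
    proof (rule DL[OF cK n rn XK])
      fix z assume "z \<in> K"
      then obtain y where y: "y \<in> Y" "dist z y < \<rho>" using Y(4) by auto
      then obtain j where j: "j < n" "dist y (X j) < \<rho>" using Xc by auto
      have "dist z (X j) < 2 * \<rho>" using y j dist_triangle[of z "X j" y] by linarith
      then show "\<exists>j<n. dist z (X j) < rn / 5" using j \<rho> by (intro exI[of _ j]) auto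
    qed
  qed
  have "1 - 2 ^ d / q * exp (- (real n * q)) \<le> 1 - measure P bad" using mbad by simp
  also have "\<dots> = measure P (space P - bad)" using PP.prob_compl[OF badm] by simp
  also have "\<dots> \<le> measure P {X \<in> space P. vr_contractible n rn X}"
    by (rule PP.finite_measure_mono[OF sub]) (use meas_contr[OF sb] P_def in auto)
  finally show ?thesis unfolding d_def P_def .
qed



lemma asym1: "(\<lambda>n::nat. real n / (2 * ln (real n)) * exp (- (real n * (2 * ln (real n) / real n)))) \<longlonglongrightarrow> 0"
  by real_asymp

lemma asym2: "(\<lambda>n::nat. 2 * ln (real n) / real n) \<longlonglongrightarrow> 0"
  by real_asymp

lemma min_pow: assumes "0 \<le> a" "0 \<le> (b::real)" shows "(min a b) ^ k = min (a ^ k) (b ^ k)"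
proof (cases "a \<le> b")
  case True
  then have "a ^ k \<le> b ^ k" using assms by (intro power_mono) auto
  then show ?thesis using True by (simp add: min_absorb1)
next
  case False
  then have "b ^ k \<le> a ^ k" using assms by (intro power_mono) auto
  then show ?thesis using False by (simp add: min_absorb2)
qed

theorem theorem1p1:
  fixes K :: "'a::euclidean_space set"
    and \<nu> :: "'a measure"
    and f :: "'a \<Rightarrow> real"
  assumes "convex_body K"
    and "f \<in> borel_measurable borel"
    and "\<And>x. 0 \<le> f x"
    and "\<And>x. x \<notin> K \<Longrightarrow> f x = 0"
    and "\<exists>\<delta>>0. \<forall>x\<in>K. \<delta> \<le> f x"
    and "\<nu> = density lborel (\<lambda>x. ennreal (f x))"
    and "prob_space \<nu>"
  shows "\<exists>c>0. \<forall>r :: nat \<Rightarrow> real.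
           (\<forall>n. c * (ln (real n) / real n) powr (1 / real DIM('a)) \<le> r n) \<longrightarrow>
           (\<lambda>n. measure (PiM {..<n} (\<lambda>_. \<nu>)) {X \<in> space (PiM {..<n} (\<lambda>_. \<nu>)). vr_contractible n (r n) X})
             \<longlonglongrightarrow> 1"
proof -
  note cb = assms(1) and fm = assms(2) and f0 = assms(4) and \<nu>def = assms(6) and ps = assms(7)
  obtain \<delta> where \<delta>: "\<delta> > 0" "\<forall>x\<in>K. \<delta> \<le> f x" using assms(5) by blast
  obtain \<kappa> \<rho>0 where \<kappa>: "\<kappa> > 0" and \<rho>0: "\<rho>0 > 0"
    and LB: "\<forall>y\<in>K. \<forall>\<rho>. 0 < \<rho> \<and> \<rho> \<le> \<rho>0 \<longrightarrow> \<kappa> * \<rho> ^ DIM('a) \<le> measure \<nu> (ball y \<rho>)"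
    using ball_lower[OF cb fm \<delta>(2) \<delta>(1) \<nu>def ps] by blast
  have sb: "sets \<nu> = sets borel" using \<nu>def by simp
  have spU: "space \<nu> = UNIV" using \<nu>def by simp
  have cK: "convex K" and kK: "compact K" using cb by (auto simp: convex_body_def)
  have Km: "- K \<in> sets \<nu>" using sb compact_imp_closed[OF kK] by (simp add: borel_open open_Compl)
  have "emeasure \<nu> (- K) = (\<integral>\<^sup>+x. ennreal (f x) * indicator (- K) x \<partial>lborel)"
    unfolding \<nu>def by (rule emeasure_density) (use fm Km sb \<nu>def in auto)
  also have "(\<lambda>x. ennreal (f x) * indicator (- K) x) = (\<lambda>x. 0)"
    by (auto simp: indicator_def f0 fun_eq_iff)
  finally have "emeasure \<nu> (- K) = 0" by simp
  then have nK: "measure \<nu> (- K) = 0" by (simp add: measure_def)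
  define d where "d = DIM('a)"
  have d1: "1 \<le> d" unfolding d_def using DIM_positive by (simp add: Suc_le_eq)
  define c where "c = 10 * max 1 (2/\<kappa>)"
  have c: "c > 0" by (simp add: c_def)
  show ?thesis
  proof (intro exI[of _ c] conjI c allI impI)
    fix r :: "nat \<Rightarrow> real"
    assume H: "\<forall>n. c * (ln (real n) / real n) powr (1 / real DIM('a)) \<le> r n"
    define q where "q n = min (2 * ln (real n) / real n) (\<kappa> * \<rho>0 ^ d)" for n :: nat
    define b where "b n = 2 ^ d / q n * exp (- (real n * q n))" for n :: nat
    define A where "A n = measure (PiM {..<n} (\<lambda>_. \<nu>)) {X \<in> space (PiM {..<n} (\<lambda>_. \<nu>)). vr_contractible n (r n) X}" for n
    have lower: "1 - b n \<le> A n" if n2: "n \<ge> 2" for n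
    proof -
      define L where "L = ln (real n) / real n"
      have L: "0 < L" using n2 by (simp add: L_def)
      have Lp: "0 < L powr (1 / real d)" using L by simp
      have rn: "c * L powr (1 / real d) \<le> r n" using H unfolding L_def d_def by blast
      then have rpos: "0 < r n" using c Lp by (smt (verit) mult_pos_pos)
      have q: "0 < q n" using n2 \<kappa> \<rho>0 by (simp add: q_def)
      have pw: "(L powr (1 / real d)) ^ d = L"
      proof -
        have "(L powr (1 / real d)) ^ d = (L powr (1 / real d)) powr (real d)"
          using Lp by (simp add: powr_realpow)
        also have "\<dots> = L" using d1 L by (simp add: powr_powr)
        finally show ?thesis .
      qed
      have "(c/10 * L powr (1 / real d)) ^ d \<le> (r n / 10) ^ d"
        using rn c Lp by (intro power_mono) auto
      moreover have "(c/10 * L powr (1 / real d)) ^ d = (c/10) ^ d * L"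
        by (simp only: power_mult_distrib pw)
      moreover have "c/10 \<le> (c/10) ^ d"
        using d1 by (intro self_le_power) (auto simp: c_def)
      moreover have "2 / \<kappa> \<le> c / 10" by (simp add: c_def)
      ultimately have "2 / \<kappa> * L \<le> (r n / 10) ^ d" using L
        mult_right_mono[of "2/\<kappa>" "(c/10)^d" L] by linarith
      then have k1: "2 * L \<le> \<kappa> * (r n / 10) ^ d" using \<kappa> by (simp add: field_simps)
      have "q n \<le> \<kappa> * (min (r n / 10) \<rho>0) ^ d"
      proof (cases "r n / 10 \<le> \<rho>0")
        case True
        have "q n \<le> 2 * L" by (simp add: q_def L_def)
        then show ?thesis using True k1 by (simp add: min_absorb1)
      next
        case False
        have "q n \<le> \<kappa> * \<rho>0 ^ d" by (simp add: q_def)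
        then show ?thesis using False by (simp add: min_absorb2)
      qed
      then have "1 - 2 ^ d / q n * exp (- (real n * q n)) \<le> A n"
        unfolding A_def d_def
        by (intro core[OF ps sb spU cK Km nK LB \<kappa> \<rho>0 _ rpos q]) (use n2 in auto)
      then show ?thesis by (simp add: b_def)
    qed
    have upper: "A n \<le> 1" for n
    proof -
      interpret PP: prob_space "PiM {..<n} (\<lambda>_. \<nu>)" by (rule prob_space_PiM) (rule ps)
      show ?thesis unfolding A_def by simp
    qed
    have ev: "eventually (\<lambda>n. 2 * ln (real n) / real n < \<kappa> * \<rho>0 ^ d) sequentially"
      using order_tendstoD(2)[OF asym2, of "\<kappa> * \<rho>0 ^ d"] \<kappa> \<rho>0 by simp
    have "eventually (\<lambda>n. 2 ^ d * (real n / (2 * ln (real n)) * exp (- (real n * (2 * ln (real n) / real n)))) = b n) sequentially"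
      using ev by eventually_elim (simp add: b_def q_def)
    moreover have "(\<lambda>n. 2 ^ d * (real n / (2 * ln (real n)) * exp (- (real n * (2 * ln (real n) / real n))))) \<longlonglongrightarrow> 2 ^ d * 0"
      by (intro tendsto_mult tendsto_const asym1)
    ultimately have "b \<longlonglongrightarrow> 0" by (simp add: tendsto_cong)
    then have lb: "(\<lambda>n. 1 - b n) \<longlonglongrightarrow> 1" using tendsto_diff[OF tendsto_const, of b 0 sequentially 1] by simp
    show "A \<longlonglongrightarrow> 1"
    proof (rule tendsto_sandwich[OF _ _ lb tendsto_const])
      show "eventually (\<lambda>n. 1 - b n \<le> A n) sequentially"
        using eventually_ge_at_top[of 2] by eventually_elim (rule lower)
      show "eventually (\<lambda>n. A n \<le> 1) sequentially" using upper by simp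
    qed
  qed
qed


end
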